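(* Let $M$ be a matroid on ground set $E$ that is $k$-nearly finitary for some integer $k$. Let $S(M)=\{F^*\cup B: F^*\text{ is a base of }(M^{\mathrm{fin}})^*,\ B\text{ is a base of }M,\ F^*\cap B=\emptyset\}$ and let $S(M)_{\min}$ be the set of inclusion-minimal elements of $S(M)$. Then $S(M)_{\min}$ is non-empty.
   Context: Matroids (possibly infinite): $\emptyset$ independent; subsets of independent sets independent; if $B$ is maximal independent and $A$ non-maximal independent, then $A\cup\{b\}$ is independent for some $b\in B\setminus A$; for independent $A\subseteq X\subseteq E$ there is a maximal independent $S$ with $A\subseteq S\subseteq X$. Bases are maximal independent sets. The dual $N^*$ has as bases the complements $E\setminus B$ of bases $B$ of $N$. The finitarization $M^{\mathrm{fin}}$ has as independent sets those sets all of whose finite subsets are independent in $M$. $M$ is $k$-nearly finitary if $|F\setminus B|\le k$ whenever a base $F$ of $M^{\mathrm{fin}}$ contains a base $B$ of $M$. *)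

theory Defs
  imports Main
begin

definition maximal_in :: "'a set set \<Rightarrow> 'a set \<Rightarrow> bool" where
  "maximal_in \<F> X \<longleftrightarrow> X \<in> \<F> \<and> (\<forall>Y\<in>\<F>. X \<subseteq> Y \<longrightarrow> Y = X)"

definition matroid :: "'a set \<Rightarrow> 'a set set \<Rightarrow> bool" where
  "matroid E I \<longleftrightarrow>
     (\<forall>A\<in>I. A \<subseteq> E) \<and>
     {} \<in> I \<and>
     (\<forall>A B. A \<in> I \<and> B \<subseteq> A \<longrightarrow> B \<in> I) \<and>
     (\<forall>A B. A \<in> I \<and> \<not> maximal_in I A \<and> maximal_in I B \<longrightarrow>
            (\<exists>b\<in>B - A. insert b A \<in> I)) \<and>
     (\<forall>A X. A \<in> I \<and> A \<subseteq> X \<and> X \<subseteq> E \<longrightarrow>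
            (\<exists>S. maximal_in {Z \<in> I. Z \<subseteq> X} S \<and> A \<subseteq> S))"

definition bases :: "'a set set \<Rightarrow> 'a set set" where
  "bases I = {B. maximal_in I B}"

definition dual_bases :: "'a set \<Rightarrow> 'a set set \<Rightarrow> 'a set set" where
  "dual_bases E I = {E - B | B. B \<in> bases I}"

definition fin_indep :: "'a set \<Rightarrow> 'a set set \<Rightarrow> 'a set set" where
  "fin_indep E I = {A. A \<subseteq> E \<and> (\<forall>F. F \<subseteq> A \<and> finite F \<longrightarrow> F \<in> I)}"

definition nearly_finitary :: "nat \<Rightarrow> 'a set \<Rightarrow> 'a set set \<Rightarrow> bool" where
  "nearly_finitary k E I \<longleftrightarrow>
     (\<forall>F B. F \<in> bases (fin_indep E I) \<and> B \<in> bases I \<and> B \<subseteq> F \<longrightarrow>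
            finite (F - B) \<and> card (F - B) \<le> k)"

definition S_set :: "'a set \<Rightarrow> 'a set set \<Rightarrow> 'a set set" where
  "S_set E I = {Fs \<union> B | Fs B. Fs \<in> dual_bases E (fin_indep E I) \<and> B \<in> bases I \<and> Fs \<inter> B = {}}"

definition S_min :: "'a set \<Rightarrow> 'a set set \<Rightarrow> 'a set set" where
  "S_min E I = {X \<in> S_set E I. \<forall>Y \<in> S_set E I. Y \<subseteq> X \<longrightarrow> Y = X}"

end

theory Submission
  imports Defs
begin

lemma m_subE: "matroid E I \<Longrightarrow> A \<in> I \<Longrightarrow> A \<subseteq> E"
  unfolding matroid_def by (drule conjunct1) blast

lemma m_empty: "matroid E I \<Longrightarrow> {} \<in> I"
  unfolding matroid_def by (drule conjunct2, drule conjunct1) assumption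

lemma m_sub: "matroid E I \<Longrightarrow> A \<in> I \<Longrightarrow> C \<subseteq> A \<Longrightarrow> C \<in> I"
  unfolding matroid_def by (drule conjunct2, drule conjunct2, drule conjunct1) blast

lemma m_ext: "matroid E I \<Longrightarrow> A \<in> I \<Longrightarrow> A \<subseteq> X \<Longrightarrow> X \<subseteq> E \<Longrightarrow> \<exists>S. maximal_in {Z \<in> I. Z \<subseteq> X} S \<and> A \<subseteq> S"
  unfolding matroid_def by (drule conjunct2, drule conjunct2, drule conjunct2, drule conjunct2) blast

lemma ext_fin_base:
  assumes m: "matroid E I" and B: "B \<in> I"
  shows "\<exists>F\<in>bases (fin_indep E I). B \<subseteq> F"
proof -
  have sub: "\<And>A C. A \<in> I \<Longrightarrow> C \<subseteq> A \<Longrightarrow> C \<in> I" and subE: "\<And>A. A \<in> I \<Longrightarrow> A \<subseteq> E"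
    using m_sub[OF m] m_subE[OF m] by blast+
  define A where "A = {X \<in> fin_indep E I. B \<subseteq> X}"
  have BA: "B \<in> A" using B sub subE unfolding A_def fin_indep_def by blast
  have "\<forall>C\<in>chains A. \<exists>U\<in>A. \<forall>X\<in>C. X \<subseteq> U"
  proof
    fix C assume C: "C \<in> chains A"
    show "\<exists>U\<in>A. \<forall>X\<in>C. X \<subseteq> U"
    proof (cases "C = {}")
      case True then show ?thesis using BA by blast
    next
      case False
      have CA: "C \<subseteq> A" and ch: "subset.chain A C" using C by (auto simp: chains_alt_def subset.chain_def chains_def)
      have "\<Union>C \<in> A"
        unfolding A_def fin_indep_def
      proof (intro CollectI conjI allI impI)
        show "\<Union>C \<subseteq> E" using CA by (auto simp: A_def fin_indep_def)
        show "B \<subseteq> \<Union>C" using CA False by (auto simp: A_def)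
        fix F assume F: "F \<subseteq> \<Union>C \<and> finite F"
        then obtain X where "X \<in> C" "F \<subseteq> X"
          using finite_subset_Union_chain[OF _ _ False ch] by blast
        then show "F \<in> I" using CA F by (auto simp: A_def fin_indep_def)
      qed
      then show ?thesis by blast
    qed
  qed
  from Zorn_Lemma2[OF this] obtain M where M: "M \<in> A" "\<forall>X\<in>A. M \<subseteq> X \<longrightarrow> X = M" by blast
  have "maximal_in (fin_indep E I) M"
    using M unfolding maximal_in_def A_def by blast
  then show ?thesis using M(1) unfolding bases_def A_def by blast
qed

theorem theorem3p4p4:
  fixes E :: "'a set" and I :: "'a set set" and k :: nat
  assumes "matroid E I"
    and "nearly_finitary k E I"
  shows "S_min E I \<noteq> {}"
proof -
  have subE: "\<And>A. A \<in> I \<Longrightarrow> A \<subseteq> E" using m_subE[OF assms(1)] by blast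
  have "{} \<in> I" using m_empty[OF assms(1)] .
  then obtain S where S: "maximal_in {Z \<in> I. Z \<subseteq> E} S"
    using m_ext[OF assms(1), of "{}" E] by blast
  have "{Z \<in> I. Z \<subseteq> E} = I" using subE by blast
  with S have SB: "S \<in> bases I" by (simp add: bases_def)
  then have "S \<in> I" by (simp add: bases_def maximal_in_def)
  then obtain F0 where F0: "F0 \<in> bases (fin_indep E I)" "S \<subseteq> F0"
    using ext_fin_base[OF assms(1)] by blast
  define P where "P = {(F, B). F \<in> bases (fin_indep E I) \<and> B \<in> bases I \<and> B \<subseteq> F}"
  have nf: "\<And>F B. (F, B) \<in> P \<Longrightarrow> finite (F - B) \<and> card (F - B) \<le> k"
    using assms(2) unfolding nearly_finitary_def P_def by blast
  define K where "K = (\<lambda>(F, B). card (F - B)) ` P"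
  have "(F0, S) \<in> P" using F0 SB by (simp add: P_def)
  then have Kne: "K \<noteq> {}" by (auto simp: K_def)
  have Kfin: "finite K" by (rule finite_subset[of _ "{..k}"]) (auto simp: K_def dest: nf)
  have "Max K \<in> K" using Kne Kfin by simp
  then obtain F B where FB: "(F, B) \<in> P" "card (F - B) = Max K" by (auto simp: K_def)
  have FE: "F \<subseteq> E" using FB(1) by (auto simp: P_def bases_def maximal_in_def fin_indep_def)
  have BF: "B \<subseteq> F" using FB(1) by (auto simp: P_def)
  have Xeq: "(E - F) \<union> B = E - (F - B)" using FE BF by blast
  have FBb: "F \<in> bases (fin_indep E I)" "B \<in> bases I" using FB(1) by (auto simp: P_def)
  have dF: "E - F \<in> dual_bases E (fin_indep E I)" unfolding dual_bases_def using FBb(1) by blast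
  have XS: "(E - F) \<union> B \<in> S_set E I"
    unfolding S_set_def using dF FBb(2) BF by blast
  have "(E - F) \<union> B \<in> S_min E I"
    unfolding S_min_def
  proof (intro CollectI conjI ballI impI)
    show "(E - F) \<union> B \<in> S_set E I" by fact
    fix Y assume Y: "Y \<in> S_set E I" "Y \<subseteq> (E - F) \<union> B"
    then obtain Fs B' where Y0: "Y = Fs \<union> B'" "Fs \<in> dual_bases E (fin_indep E I)" "B' \<in> bases I"
      "Fs \<inter> B' = {}"
      unfolding S_set_def by blast
    then obtain F' where "Fs = E - F'" "F' \<in> bases (fin_indep E I)" unfolding dual_bases_def by blast
    with Y0 have Y': "Y = (E - F') \<union> B'" "F' \<in> bases (fin_indep E I)" "B' \<in> bases I"
      "(E - F') \<inter> B' = {}" by auto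
    have F'E: "F' \<subseteq> E" using Y'(2) by (auto simp: bases_def maximal_in_def fin_indep_def)
    have B'E: "B' \<subseteq> E" using Y'(3) subE by (auto simp: bases_def maximal_in_def)
    have B'F': "B' \<subseteq> F'" using Y'(4) B'E by blast
    have P': "(F', B') \<in> P" using Y' B'F' by (simp add: P_def)
    have Yeq: "Y = E - (F' - B')" using Y'(1) F'E B'F' by blast
    have incl: "F - B \<subseteq> F' - B'" using Y(2) Xeq Yeq FE by blast
    have fin': "finite (F' - B')" using nf[OF P'] by blast
    have "card (F' - B') \<in> K" using P' by (force simp: K_def)
    then have "card (F' - B') \<le> card (F - B)" using FB(2) Kfin by simp
    then have "card (F - B) = card (F' - B')" using card_mono[OF fin' incl] by (rule le_antisym[rotated])
    then have "F - B = F' - B'" by (rule card_subset_eq[OF fin' incl])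
    then show "Y = (E - F) \<union> B" using Xeq Yeq by simp
  qed
  then show ?thesis by blast
qed

end
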